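(* There is a constant $C$ depending only on $n$ such that for every non-negative Borel measure $\mu$ on $\overline{\mathbb{R}^{n+1}_+}$, $$\sup_{B\subset\mathbb{R}^n}\frac1{|B|}\iint_{\underline{\widehat B}}E(d\mu)\,d\mu\le C,$$ where the supremum is over open balls $B$.
   Context: $\mathbb{R}^{n+1}_+=\mathbb{R}^n\times(0,\infty)$ and $\overline{\mathbb{R}^{n+1}_+}$ its closure. For $(y,t)\in\mathbb{R}^{n+1}_+$, $B(y,t)=\{z\in\mathbb{R}^n:|z-y|<t\}$; $\Gamma(x)=\{(y,t)\in\mathbb{R}^{n+1}_+:|y-x|<t\}$; for an open ball $B\subset\mathbb{R}^n$, $\widehat B=\{(y,t)\in\mathbb{R}^{n+1}_+:B(y,t)\subset B\}$ and $\underline{\widehat B}$ denotes its closure (the closed tent). The balayage of $\mu$ is $\overline{\mathcal{A}}(d\mu)(x)=\iint_{\Gamma(x)}s^{-n}\,d\mu(z,s)$, $x\in\mathbb{R}^n$, and its extension is $E(d\mu)(y,t)=\frac1{|B(y,t)|}\int_{B(y,t)}\overline{\mathcal{A}}(d\mu)(x)^{-1}\,dx$ for $(y,t)\in\mathbb{R}^{n+1}_+$. *)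

theory Defs
  imports "HOL-Analysis.Analysis"
begin

text \<open>Points of the (closed) upper half space are pairs (y,t) with y in the
  n-dimensional Euclidean space 'a (n = DIM('a)) and t real.\<close>

definition upper_half_closed :: "('a::euclidean_space \<times> real) set" where
  "upper_half_closed = {z. snd z \<ge> 0}"

definition cone_at :: "'a::euclidean_space \<Rightarrow> ('a \<times> real) set" where
  "cone_at x = {(y, t). 0 < t \<and> dist y x < t}"

definition tent :: "'a::euclidean_space set \<Rightarrow> ('a \<times> real) set" where
  "tent B = {(y, t). 0 < t \<and> ball y t \<subseteq> B}"

definition closed_tent :: "'a::euclidean_space set \<Rightarrow> ('a \<times> real) set" where
  "closed_tent B = closure (tent B)"

definition balayage :: "('a::euclidean_space \<times> real) measure \<Rightarrow> 'a \<Rightarrow> ennreal" where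
  "balayage M x = (\<integral>\<^sup>+ z. indicator (cone_at x) z * ennreal (1 / (snd z) ^ DIM('a)) \<partial>M)"

text \<open>Extension E(d mu)(y,t): average over B(y,t) of balayage^(-1) (with
  inverse 0 = \<infinity>, inverse \<infinity> = 0 in ennreal). E is only defined for t > 0;
  on the boundary t = 0 it is set to 0.\<close>
definition ext_bal :: "('a::euclidean_space \<times> real) measure \<Rightarrow> 'a \<times> real \<Rightarrow> ennreal" where
  "ext_bal M z = (if 0 < snd z then
      (\<integral>\<^sup>+ x \<in> ball (fst z) (snd z). inverse (balayage M x) \<partial>lborel)
        / emeasure lborel (ball (fst z) (snd z))
    else 0)"

end

theory Submission
  imports Defs
begin

lemma meas_K_borel:
  "(\<lambda>w::('a::euclidean_space \<times> ('a \<times> real)). indicator (cone_at (fst w)) (snd w) * ennreal (1 / (snd (snd w)) ^ DIM('a))) \<in> borel_measurable borel"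
proof -
  have "(\<lambda>w::('a \<times> ('a \<times> real)). indicator (cone_at (fst w)) (snd w)::ennreal) = indicator {w. 0 < snd (snd w) \<and> dist (fst (snd w)) (fst w) < snd (snd w)}"
    by (auto simp: cone_at_def indicator_def fun_eq_iff split: prod.splits)
  moreover have "{w::('a \<times> ('a \<times> real)). 0 < snd (snd w) \<and> dist (fst (snd w)) (fst w) < snd (snd w)} \<in> sets borel"
    by (intro borel_open open_Collect_conj open_Collect_less continuous_intros)
  ultimately have 1: "(\<lambda>w::('a \<times> ('a \<times> real)). indicator (cone_at (fst w)) (snd w)::ennreal) \<in> borel_measurable borel"
    by simp
  have 2: "(\<lambda>w::('a \<times> ('a \<times> real)). ennreal (1 / (snd (snd w)) ^ DIM('a))) \<in> borel_measurable borel"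
    by (intro measurable_compose[OF _ measurable_ennreal] borel_measurable_divide borel_measurable_power borel_measurable_const borel_measurable_continuous_onI continuous_intros)
  show ?thesis using 1 2 by (rule borel_measurable_times_ennreal)
qed


lemma meas_transfer:
  fixes N :: "('a::euclidean_space \<times> real) measure"
  assumes N: "sets N = sets (restrict_space borel upper_half_closed)"
    and f: "f \<in> borel_measurable (borel :: ('a \<times> ('a \<times> real)) measure)"
  shows "f \<in> borel_measurable (lborel \<Otimes>\<^sub>M N)"
proof -
  have s: "snd \<in> measurable (lborel \<Otimes>\<^sub>M N) (borel :: ('a \<times> real) measure)"
  proof (rule measurable_compose[OF measurable_snd])
    show "(\<lambda>x. x) \<in> measurable N borel"
      using measurable_cong_sets[OF N refl] measurable_restrict_space1[OF measurable_ident_sets[of borel borel]]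
      by auto
  qed
  have "(\<lambda>w. (fst w, snd w)) \<in> measurable (lborel \<Otimes>\<^sub>M N) (borel \<Otimes>\<^sub>M (borel :: ('a \<times> real) measure))"
    by (intro measurable_Pair s) (simp add: measurable_fst'')
  then have "(\<lambda>w. w) \<in> measurable (lborel \<Otimes>\<^sub>M N) (borel :: ('a \<times> ('a \<times> real)) measure)"
    by (simp add: borel_prod)
  from measurable_compose[OF this f] show ?thesis by simp
qed


lemma closed_tent_sub:
  fixes c :: "'a::euclidean_space"
  shows "closed_tent (ball c r) \<subseteq> {z. dist (fst z) c + snd z \<le> r \<and> 0 \<le> snd z}"
proof -
  have "tent (ball c r) \<subseteq> {z. dist (fst z) c + snd z \<le> r \<and> 0 \<le> snd z}"
    by (auto simp: tent_def ball_subset_ball_iff)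
  moreover have "closed {z::'a\<times>real. dist (fst z) c + snd z \<le> r \<and> 0 \<le> snd z}"
    by (intro closed_Collect_conj closed_Collect_le continuous_intros)
  ultimately show ?thesis unfolding closed_tent_def by (rule closure_minimal)
qed

lemma closed_tent_ball:
  fixes c :: "'a::euclidean_space"
  assumes "z \<in> closed_tent (ball c r)" "z \<in> cone_at x"
  shows "x \<in> ball c r" "snd z \<le> r" "0 < snd z"
proof -
  have a: "dist (fst z) c + snd z \<le> r" using closed_tent_sub assms(1) by blast
  have b: "0 < snd z" "dist (fst z) x < snd z" using assms(2) by (auto simp: cone_at_def)
  show "x \<in> ball c r" using a b dist_triangle[of x c "fst z"] by (simp add: dist_commute)
  show "snd z \<le> r" using a by (smt (verit) zero_le_dist)
  show "0 < snd z" by (fact b)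
qed

lemma closed_tent_sets:
  fixes c :: "'a::euclidean_space"
  assumes N: "sets N = sets (restrict_space borel upper_half_closed)"
  shows "closed_tent (ball c r) \<in> sets N"
proof -
  have "closed_tent (ball c r) \<subseteq> upper_half_closed"
    using closed_tent_sub[of c r] by (auto simp: upper_half_closed_def)
  moreover have "closed_tent (ball c r) \<in> sets borel"
    unfolding closed_tent_def by (rule borel_closed) simp
  ultimately show ?thesis unfolding N
    by (auto simp: sets_restrict_space intro!: image_eqI[where x="closed_tent (ball c r)"])
qed

lemma inv_mult_le1:
  fixes a b :: ennreal
  assumes "b \<le> a" shows "inverse a * b \<le> 1"
proof (cases "a = 0")
  case True then show ?thesis using assms by simp
next
  case False
  show ?thesis
  proof (cases "a = \<infinity>")
    case True then show ?thesis by simp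
  next
    case f2: False
    have "inverse a * b \<le> inverse a * a" using assms by (intro mult_left_mono) auto
    also have "\<dots> = (1 * a) / a" by (simp add: divide_ennreal_def mult.commute)
    also have "\<dots> = 1" using False f2 mult_divide_eq_ennreal[of a 1] by (simp add: top_ennreal.rep_eq infinity_ennreal_def)
    finally show ?thesis .
  qed
qed


lemma main_sf:
  fixes N :: "('a::euclidean_space \<times> real) measure" and c :: 'a
  assumes N: "sets N = sets (restrict_space borel upper_half_closed)"
    and sf: "sigma_finite_measure N"
  shows "(\<integral>\<^sup>+ z. indicator (closed_tent (ball c r)) z * ext_bal N z \<partial>N)
           \<le> ennreal (1 / unit_ball_vol (DIM('a))) * emeasure lborel (ball c r)"
proof -
  interpret N: sigma_finite_measure N by (fact sf)
  interpret P: pair_sigma_finite lborel N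
    unfolding pair_sigma_finite_def using sf sigma_finite_lborel by auto
  define T where "T = closed_tent (ball c r)"
  define \<omega> where "\<omega> = unit_ball_vol (DIM('a))"
  have \<omega>: "0 < \<omega>" unfolding \<omega>_def by simp
  define K where "K = (\<lambda>(x::'a) (z::'a\<times>real). indicator (cone_at x) z * ennreal (1 / (snd z) ^ DIM('a)))"
  define A where "A = balayage N"
  have A_def': "A x = (\<integral>\<^sup>+ z. K x z \<partial>N)" for x
    unfolding A_def balayage_def K_def by simp
  have Kp: "(\<lambda>w. K (fst w) (snd w)) \<in> borel_measurable (lborel \<Otimes>\<^sub>M N)"
    unfolding K_def using meas_transfer[OF N meas_K_borel] by simp
  then have Kp': "case_prod K \<in> borel_measurable (lborel \<Otimes>\<^sub>M N)"
    by (simp add: split_beta')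
  have Am: "A \<in> borel_measurable lborel"
    unfolding A_def' using N.borel_measurable_nn_integral[OF Kp'] by simp
  then have Amb[measurable]: "A \<in> borel_measurable borel" by simp
  have Ts: "T \<in> sets N" unfolding T_def by (rule closed_tent_sets[OF N])
  have Tm: "(\<lambda>w. indicator T (snd w) :: ennreal) \<in> borel_measurable (lborel \<Otimes>\<^sub>M N)"
    using Ts by measurable
  define F where "F = (\<lambda>x z. (ennreal (1/\<omega>) * inverse (A x)) * (K x z * indicator T z))"
  have Fm: "case_prod F \<in> borel_measurable (lborel \<Otimes>\<^sub>M N)"
  proof -
    have "(\<lambda>w. (ennreal (1/\<omega>) * inverse (A (fst w))) * (K (fst w) (snd w) * indicator T (snd w))) \<in> borel_measurable (lborel \<Otimes>\<^sub>M N)"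
      using Kp Tm Am by measurable
    then show ?thesis unfolding F_def by (simp add: split_beta')
  qed
  have Kx: "(\<lambda>z. K x z) \<in> borel_measurable N" for x
    using measurable_compose[OF measurable_Pair1'[of x lborel N] Kp] by simp
  have pw: "indicator T z * ext_bal N z \<le> (\<integral>\<^sup>+ x. F x z \<partial>lborel)" for z
  proof (cases "0 < snd z")
    case False then show ?thesis by (simp add: ext_bal_def)
  next
    case True
    obtain y t where z: "z = (y, t)" by (cases z)
    with True have t: "0 < t" by simp
    have Kball: "K x z = indicator (ball y t) x * ennreal (1 / t ^ DIM('a))" for x
      using t by (auto simp: K_def z cone_at_def indicator_def)
    have "(\<integral>\<^sup>+ x. F x z \<partial>lborel)
        = (\<integral>\<^sup>+ x. (ennreal (1/\<omega>) * ennreal (1 / t ^ DIM('a)) * indicator T z) * (inverse (A x) * indicator (ball y t) x) \<partial>lborel)"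
      unfolding F_def Kball by (intro nn_integral_cong) (simp add: ac_simps)
    also have "\<dots> = (ennreal (1/\<omega>) * ennreal (1 / t ^ DIM('a)) * indicator T z) * (\<integral>\<^sup>+ x \<in> ball y t. inverse (A x) \<partial>lborel)"
      by (intro nn_integral_cmult) (measurable, simp)
    finally have eqF: "(\<integral>\<^sup>+ x. F x z \<partial>lborel) = (ennreal (1/\<omega>) * ennreal (1 / t ^ DIM('a)) * indicator T z) * (\<integral>\<^sup>+ x \<in> ball y t. inverse (A x) \<partial>lborel)" .
    have vol: "emeasure lborel (ball y t) = ennreal (\<omega> * t ^ DIM('a))"
      unfolding \<omega>_def using emeasure_ball[of t y] t by simp
    have E: "ext_bal N z = (\<integral>\<^sup>+ x \<in> ball y t. inverse (A x) \<partial>lborel) * ennreal (1 / (\<omega> * t ^ DIM('a)))"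
      using t \<omega> unfolding ext_bal_def z A_def
      by (simp add: vol divide_ennreal_def inverse_ennreal field_simps)
    have "ennreal (1/\<omega>) * ennreal (1 / t ^ DIM('a)) = ennreal (1 / (\<omega> * t ^ DIM('a)))"
      using t \<omega> by (simp add: ennreal_mult'[symmetric])
    then show ?thesis unfolding eqF E by (simp add: ac_simps)
  qed
  have inner: "(\<integral>\<^sup>+ z. F x z \<partial>N) \<le> ennreal (1/\<omega>) * indicator (ball c r) x" for x
  proof (cases "x \<in> ball c r")
    case False
    have "(\<integral>\<^sup>+ z. F x z \<partial>N) = (\<integral>\<^sup>+ z. 0 \<partial>N)"
    proof (intro nn_integral_cong)
      fix z
      show "F x z = 0"
      proof (cases "z \<in> T \<and> z \<in> cone_at x")
        case True then show ?thesis using closed_tent_ball(1)[of z c r x] False T_def by auto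
      next
        case False then show ?thesis by (auto simp: F_def K_def)
      qed
    qed
    then show ?thesis by simp
  next
    case True
    have "(\<integral>\<^sup>+ z. F x z \<partial>N) = (ennreal (1/\<omega>) * inverse (A x)) * (\<integral>\<^sup>+ z. K x z * indicator T z \<partial>N)"
      unfolding F_def using Kx Ts by (intro nn_integral_cmult borel_measurable_times_ennreal borel_measurable_indicator)
    also have "(\<integral>\<^sup>+ z. K x z * indicator T z \<partial>N) \<le> A x"
      unfolding A_def' by (intro nn_integral_mono) (simp add: indicator_def)
    then have "(ennreal (1/\<omega>) * inverse (A x)) * (\<integral>\<^sup>+ z. K x z * indicator T z \<partial>N) \<le> ennreal (1/\<omega>) * 1"
      unfolding mult.assoc by (intro mult_left_mono inv_mult_le1) auto
    finally show ?thesis using True by simp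
  qed
  have "(\<integral>\<^sup>+ z. indicator T z * ext_bal N z \<partial>N) \<le> (\<integral>\<^sup>+ z. (\<integral>\<^sup>+ x. F x z \<partial>lborel) \<partial>N)"
    by (intro nn_integral_mono pw)
  also have "\<dots> = (\<integral>\<^sup>+ x. (\<integral>\<^sup>+ z. F x z \<partial>N) \<partial>lborel)"
    by (rule P.Fubini'[OF Fm])
  also have "\<dots> \<le> (\<integral>\<^sup>+ x. ennreal (1/\<omega>) * indicator (ball c r) x \<partial>lborel)"
    by (intro nn_integral_mono inner)
  also have "\<dots> = ennreal (1/\<omega>) * emeasure lborel (ball c r)"
    by (intro nn_integral_cmult_indicator) simp
  finally show ?thesis unfolding T_def \<omega>_def .
qed

lemma inv_anti: "(a::ennreal) \<le> b \<Longrightarrow> inverse b \<le> inverse a"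
proof (cases "a = 0")
  case True then show ?thesis by simp
next
  case False
  assume ab: "a \<le> b"
  show ?thesis
  proof (cases b rule: ennreal_cases)
    case top then show ?thesis by simp
  next
    case (real s)
    note real2 = real
    then obtain r where a: "a = ennreal r" "0 \<le> r" using ab
      by (metis ennreal_cases ennreal_top_neq_of_nat of_nat_0 top.extremum_uniqueI ennreal_neq_top)
    have r: "0 < r" using False a by (auto simp: ennreal_eq_0_iff)
    have "r \<le> s" using ab a real2 by (simp add: ennreal_le_iff)
    then show ?thesis using a r real2 by (simp add: inverse_ennreal ennreal_leI le_imp_inverse_le)
  qed
qed

lemma K_meas_M:
  fixes M :: "('a::euclidean_space \<times> real) measure"
  assumes M: "sets M = sets (restrict_space borel upper_half_closed)"
  shows "(\<lambda>z. indicator (cone_at x) z * ennreal (1 / (snd z) ^ DIM('a))) \<in> borel_measurable M"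
  using measurable_compose[OF measurable_Pair1'[of x lborel M] meas_transfer[OF M meas_K_borel]] by simp

lemma finite_piece:
  fixes M :: "('a::euclidean_space \<times> real) measure" and c :: 'a
  assumes M: "sets M = sets (restrict_space borel upper_half_closed)"
    and Q: "Q \<in> sets M" "emeasure M Q < \<infinity>"
    and g: "g \<in> borel_measurable M"
    and gle: "\<And>z. g z \<le> indicator (closed_tent (ball c r)) z * ext_bal M z"
    and g0: "\<And>z. z \<in> space M \<Longrightarrow> z \<notin> Q \<Longrightarrow> g z = 0"
  shows "(\<integral>\<^sup>+ z. g z \<partial>M) \<le> ennreal (1 / unit_ball_vol (DIM('a))) * emeasure lborel (ball c r)"
proof -
  define N where "N = density M (indicator Q)"
  have Qm: "indicator Q \<in> borel_measurable M" using Q by simp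
  have sN: "sets N = sets M" unfolding N_def by simp
  have spN: "space N = space M" unfolding N_def by simp
  have "emeasure N (space N) = (\<integral>\<^sup>+ z. indicator Q z * indicator (space M) z \<partial>M)"
    unfolding N_def by (simp add: emeasure_density[OF Qm])
  also have "\<dots> = (\<integral>\<^sup>+ z. indicator Q z \<partial>M)"
    by (intro nn_integral_cong) (simp add: indicator_def)
  also have "\<dots> = emeasure M Q" using Q by simp
  finally have "emeasure N (space N) \<noteq> \<infinity>" using Q by simp
  then have fin: "finite_measure N" by (rule finite_measureI)
  then have sf: "sigma_finite_measure N" by (rule finite_measure.axioms(1))
  have N': "sets N = sets (restrict_space borel upper_half_closed)" using sN M by simp
  have bal: "balayage N x \<le> balayage M x" for x
  proof -
    have "balayage N x = (\<integral>\<^sup>+ z. indicator Q z * (indicator (cone_at x) z * ennreal (1 / (snd z) ^ DIM('a))) \<partial>M)"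
      unfolding balayage_def N_def by (rule nn_integral_density[OF Qm K_meas_M[OF M]])
    also have "\<dots> \<le> balayage M x"
      unfolding balayage_def by (intro nn_integral_mono) (simp add: indicator_def)
    finally show ?thesis .
  qed
  have ext: "ext_bal M z \<le> ext_bal N z" for z
    unfolding ext_bal_def
    by (auto intro!: divide_right_mono_ennreal nn_integral_mono mult_right_mono inv_anti bal)
  have "(\<integral>\<^sup>+ z. g z \<partial>M) = (\<integral>\<^sup>+ z. indicator Q z * g z \<partial>M)"
    by (intro nn_integral_cong) (auto simp: indicator_def g0)
  also have "\<dots> = (\<integral>\<^sup>+ z. g z \<partial>N)"
    unfolding N_def by (rule nn_integral_density[OF Qm g, symmetric])
  also have "\<dots> \<le> (\<integral>\<^sup>+ z. indicator (closed_tent (ball c r)) z * ext_bal N z \<partial>N)"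
    by (intro nn_integral_mono order.trans[OF gle] mult_left_mono ext) auto
  also have "\<dots> \<le> ennreal (1 / unit_ball_vol (DIM('a))) * emeasure lborel (ball c r)"
    by (rule main_sf[OF N' sf])
  finally show ?thesis .
qed


lemma sets_upper:
  fixes M :: "('a::euclidean_space \<times> real) measure"
  assumes M: "sets M = sets (restrict_space borel upper_half_closed)"
    and S: "S \<in> sets borel" "S \<subseteq> upper_half_closed"
  shows "S \<in> sets M"
  using S unfolding M by (auto simp: sets_restrict_space intro!: image_eqI[where x=S])

lemma general_bound:
  fixes M :: "('a::euclidean_space \<times> real) measure" and c :: 'a
  assumes M: "sets M = sets (restrict_space borel upper_half_closed)" and r: "0 < r"
  shows "(\<integral>\<^sup>+ z. indicator (closed_tent (ball c r)) z * ext_bal M z \<partial>M)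
           \<le> ennreal (1 / unit_ball_vol (DIM('a))) * emeasure lborel (ball c r)"
proof -
  define T where "T = closed_tent (ball c r)"
  define f where "f = (\<lambda>z. indicator T z * ext_bal M z)"
  define B where "B = ennreal (1 / unit_ball_vol (DIM('a))) * emeasure lborel (ball c r)"
  define A where "A = balayage M"
  have Ts: "T \<in> sets M" unfolding T_def by (rule closed_tent_sets[OF M])
  have cone_open: "open (cone_at x)" for x :: 'a
  proof -
    have "cone_at x = {z. 0 < snd z \<and> dist (fst z) x < snd z}"
      by (auto simp: cone_at_def)
    also have "open \<dots>" by (intro open_Collect_conj open_Collect_less continuous_intros)
    finally show ?thesis .
  qed
  have cone_s: "cone_at x \<in> sets M" for x
    by (intro sets_upper[OF M] borel_open cone_open) (auto simp: cone_at_def upper_half_closed_def)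
  define D where "D = {x. A x < \<infinity>}"
  obtain \<F> where F: "\<F> \<subseteq> cone_at ` D" "countable \<F>" "\<Union>\<F> = \<Union>(cone_at ` D)"
    using Lindelof[of "cone_at ` D"] cone_open by blast
  have fin: "emeasure M (cone_at x \<inter> T) < \<infinity>" if "x \<in> D" for x
  proof -
    have "ennreal (1 / r ^ DIM('a)) * emeasure M (cone_at x \<inter> T)
        = (\<integral>\<^sup>+ z. ennreal (1 / r ^ DIM('a)) * indicator (cone_at x \<inter> T) z \<partial>M)"
      using cone_s Ts by (intro nn_integral_cmult_indicator[symmetric]) auto
    also have "\<dots> \<le> A x"
      unfolding A_def balayage_def
    proof (intro nn_integral_mono)
      fix z
      show "ennreal (1 / r ^ DIM('a)) * indicator (cone_at x \<inter> T) z
            \<le> indicator (cone_at x) z * ennreal (1 / snd z ^ DIM('a))"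
      proof (cases "z \<in> cone_at x \<inter> T")
        case True
        then have "0 < snd z" "snd z \<le> r" using closed_tent_ball[of z c r x] T_def by auto
        then have "1 / r ^ DIM('a) \<le> 1 / snd z ^ DIM('a)"
          by (intro divide_left_mono power_mono mult_pos_pos zero_less_power) auto
        then show ?thesis using True by (auto intro: ennreal_leI)
      qed (auto simp: indicator_def)
    qed
    also have "\<dots> < \<infinity>" using that D_def by simp
    finally have "ennreal (1 / r ^ DIM('a)) * emeasure M (cone_at x \<inter> T) < \<infinity>" .
    moreover have "ennreal (1 / r ^ DIM('a)) \<noteq> 0" using r by simp
    ultimately have "emeasure M (cone_at x \<inter> T) = 0 \<or> emeasure M (cone_at x \<inter> T) < top"
      by (simp add: ennreal_mult_less_top top_ennreal.rep_eq infinity_ennreal_def)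
    then show ?thesis by (auto simp: infinity_ennreal_def)
  qed
  have cover: "z \<in> T \<and> z \<in> \<Union>\<F>" if "z \<in> space M" "0 < g z" "g \<le> f" for g z
  proof -
    have pos: "0 < f z" using that by (metis le_fun_def order_less_le_trans)
    then have zT: "z \<in> T" by (cases "z \<in> T") (auto simp: f_def)
    obtain y t where z: "z = (y, t)" by (cases z)
    have t: "0 < t" using pos by (auto simp: f_def ext_bal_def z split: if_splits)
    have "\<exists>x\<in>ball y t. A x \<noteq> \<infinity>"
    proof (rule ccontr)
      assume "\<not> ?thesis"
      then have all: "\<forall>x\<in>ball y t. A x = \<infinity>" by blast
      have "(\<integral>\<^sup>+ x \<in> ball y t. inverse (A x) \<partial>lborel) = (\<integral>\<^sup>+ x. 0 \<partial>(lborel::'a measure))"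
        by (intro nn_integral_cong) (use all in \<open>auto simp: indicator_def infinity_ennreal_def\<close>)
      then have "f z = 0" by (simp add: f_def ext_bal_def z A_def)
      then show False using pos by simp
    qed
    then obtain x where x: "x \<in> ball y t" "A x \<noteq> \<infinity>" by blast
    have "z \<in> cone_at x" using x t by (auto simp: z cone_at_def)
    moreover have "x \<in> D" using x by (simp add: D_def less_top[symmetric] top_ennreal.rep_eq infinity_ennreal_def)
    ultimately have "z \<in> \<Union>(cone_at ` D)" by blast
    then show ?thesis using F(3) zT by simp
  qed
  have "integral\<^sup>S M g \<le> B" if g: "simple_function M g" "g \<le> f" for g
  proof -
    have gm: "g \<in> borel_measurable M" using g by (simp add: borel_measurable_simple_function)
    have "(\<integral>\<^sup>+ z. g z \<partial>M) \<le> B"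
    proof (cases "\<F> = {}")
      case True
      then have "(\<integral>\<^sup>+ z. g z \<partial>M) = (\<integral>\<^sup>+ z. 0 \<partial>M)"
        using cover[OF _ _ g(2)] by (intro nn_integral_cong) (metis empty_iff Union_empty not_gr_zero)
      then show ?thesis by simp
    next
      case False
      note Fne = False
      define C where "C = (\<lambda>k. from_nat_into \<F> k \<inter> T)"
      define Q where "Q = (\<lambda>m. \<Union>k\<le>m. C k)"
      have CF: "from_nat_into \<F> k \<in> cone_at ` D" for k
        using from_nat_into[OF False] F(1) by blast
      have Cs: "C k \<in> sets M" for k
        using CF[of k] cone_s Ts unfolding C_def by auto
      have Cfin: "emeasure M (C k) < \<infinity>" for k
        using CF[of k] fin unfolding C_def by auto
      have Qs: "Q m \<in> sets M" for m unfolding Q_def using Cs by auto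
      have Qfin: "emeasure M (Q m) < \<infinity>" for m
      proof -
        have "emeasure M (Q m) \<le> (\<Sum>k\<le>m. emeasure M (C k))"
          unfolding Q_def using Cs by (intro emeasure_subadditive_finite) auto
        also have "\<dots> < \<infinity>" using Cfin by (simp add: top_ennreal.rep_eq infinity_ennreal_def)
        finally show ?thesis .
      qed
      define G where "G = (\<lambda>m z. g z * indicator (Q m) z)"
      have Gm: "G m \<in> borel_measurable M" for m unfolding G_def using gm Qs by measurable
      have Gle: "G m z \<le> g z" for m z unfolding G_def by (auto simp: indicator_def)
      have Gbound: "(\<integral>\<^sup>+ z. G m z \<partial>M) \<le> B" for m
        unfolding B_def
      proof (rule finite_piece[OF M Qs[of m] Qfin[of m] Gm])
        show "G m z \<le> indicator (closed_tent (ball c r)) z * ext_bal M z" for z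
          using Gle[of m z] g(2) unfolding le_fun_def f_def T_def by (metis order.trans)
      qed (auto simp: G_def)
      have inc: "incseq G"
        unfolding G_def Q_def
        by (intro monoI le_funI mult_left_mono) (auto simp: indicator_def)
      have lim: "g z = (SUP m. G m z)" if z: "z \<in> space M" for z
      proof (cases "g z = 0")
        case True then show ?thesis by (simp add: G_def)
      next
        case False
        then have "z \<in> T \<and> z \<in> \<Union>\<F>" using cover[OF z _ g(2)] by (metis not_gr_zero)
        then obtain k where k: "z \<in> from_nat_into \<F> k" "z \<in> T"
          using range_from_nat_into[OF Fne F(2)] by (metis UnionE rangeE)
        have "z \<in> Q k" using k unfolding Q_def C_def by auto
        then have "G k z = g z" by (simp add: G_def)
        then have "g z \<le> (SUP m. G m z)" by (metis SUP_upper UNIV_I)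
        moreover have "(SUP m. G m z) \<le> g z" by (intro SUP_least Gle)
        ultimately show ?thesis by (rule antisym)
      qed
      have "(\<integral>\<^sup>+ z. g z \<partial>M) = (\<integral>\<^sup>+ z. (SUP m. G m z) \<partial>M)"
        by (intro nn_integral_cong lim)
      also have "\<dots> = (SUP m. \<integral>\<^sup>+ z. G m z \<partial>M)"
        by (rule nn_integral_monotone_convergence_SUP[OF inc Gm])
      also have "\<dots> \<le> B" by (intro SUP_least Gbound)
      finally show ?thesis .
    qed
    then show ?thesis using nn_integral_eq_simple_integral[OF g(1)] by simp
  qed
  then have "integral\<^sup>N M f \<le> B"
    unfolding nn_integral_def by (intro SUP_least) auto
  then show ?thesis unfolding f_def B_def T_def .
qed


theorem lemma6p1:
  shows "\<exists>C::real. \<forall>M::('a::euclidean_space \<times> real) measure.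
           sets M = sets (restrict_space borel upper_half_closed) \<longrightarrow>
           (\<forall>c r. 0 < r \<longrightarrow>
              (\<integral>\<^sup>+ z. indicator (closed_tent (ball c r)) z * ext_bal M z \<partial>M)
                / emeasure lborel (ball c r) \<le> ennreal C)"
proof (intro exI allI impI)
  fix M :: "('a \<times> real) measure" and c :: 'a and r :: real
  assume M: "sets M = sets (restrict_space borel upper_half_closed)" and r: "0 < r"
  have pos: "0 < emeasure lborel (ball c r)"
    using r by (simp add: emeasure_ball)
  show "(\<integral>\<^sup>+ z. indicator (closed_tent (ball c r)) z * ext_bal M z \<partial>M)
                / emeasure lborel (ball c r) \<le> ennreal (1 / unit_ball_vol (DIM('a)))"
    using general_bound[OF M r, of c] pos
    by (intro divide_le_posI_ennreal) (simp_all add: mult.commute)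
qed

end
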